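(* Under the assumptions of the context, there exist a neighborhood $U$ of $\bar\xi$ and $\varepsilon>0$ such that for every $\xi\in U$ there is $j\in\{1,2,3\}$ with \[ \varepsilon^{-1}|\nu_j(\xi)|\ge\alpha(\xi), \] where $\nu_1(\xi),\nu_2(\xi),\nu_3(\xi)$ are the (complex) roots in $t$ of $t^3+a_1(\xi)t^2+a_2(\xi)t+a_3(\xi)=0$.
   Context: Let $a(t,\xi),b(t,\xi)$ be real-valued $C^\infty$ functions on $(-c,T)\times(\mathbb R^n\setminus\{0\})$, homogeneous of degree $0$ in $\xi$, with $\Delta:=4a^3-27b^2\ge0$ for $t\in[0,T)$. Let $|\bar\xi|=1$ with $a(0,\bar\xi)=0$, $\partial_ta(0,\bar\xi)\ne0$. Near $(0,\bar\xi)$ write $a(t,\xi)=e_1(t,\xi)(t+\alpha(\xi))$ with $e_1>0$ smooth and $\alpha$ smooth, $\alpha(\bar\xi)=0$, $\alpha\ge0$ near $\bar\xi$, and $\Delta(t,\xi)=e_2(t,\xi)\{t^3+a_1(\xi)t^2+a_2(\xi)t+a_3(\xi)\}$ with $e_2>0$ smooth and $a_j$ smooth real-valued, $a_j(\bar\xi)=0$. *)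

theory Defs
  imports "HOL-Analysis.Analysis"
begin

fun Ck_on :: "nat \<Rightarrow> 'a::euclidean_space set \<Rightarrow> ('a \<Rightarrow> real) \<Rightarrow> bool" where
  "Ck_on 0 S f = continuous_on S f"
| "Ck_on (Suc k) S f =
     (\<exists>f'. (\<forall>x\<in>S. (f has_derivative f' x) (at x)) \<and> (\<forall>v. Ck_on k S (\<lambda>x. f' x v)))"

definition C_inf_on :: "'a::euclidean_space set \<Rightarrow> ('a \<Rightarrow> real) \<Rightarrow> bool" where
  "C_inf_on S f \<longleftrightarrow> (\<forall>k. Ck_on k S f)"

end

theory Submission
  imports Defs "HOL-Computational_Algebra.Fundamental_Theorem_Algebra"
begin

lemma cubic_vieta:
  fixes A B C :: complex
  shows "\<exists>r1 r2 r3. r1 + r2 + r3 = - A \<and> r1*r2 + r1*r3 + r2*r3 = B \<and> r1*r2*r3 = - C"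
proof -
  have "\<not> (\<exists>a l. a \<noteq> 0 \<and> l = 0 \<and> [:C,B,A,1:] = pCons a l)" by simp
  from fundamental_theorem_of_algebra_alt[OF this] obtain r1 where r1: "poly [:C,B,A,1:] r1 = 0" by blast
  hence r1': "C + r1*(B + r1*(A + r1)) = 0" by simp
  define p where "p = A + r1"
  define q where "q = B + r1 * p"
  define r2 where "r2 = (- p + csqrt (p^2 - 4*q))/2"
  define r3 where "r3 = - p - r2"
  have s: "(csqrt (p^2 - 4*q))^2 = p^2 - 4*q" by simp
  have "r2 * r3 = q"
    unfolding r3_def r2_def using s by (simp add: field_simps power2_eq_square)
  moreover have "r2 + r3 = -p" unfolding r3_def by simp
  ultimately have e1: "r1 + r2 + r3 = - A" and e2: "r1*r2 + r1*r3 + r2*r3 = B"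
     and e3: "r1*r2*r3 = - C"
  proof -
    assume a: "r2 * r3 = q" "r2 + r3 = -p"
    show "r1 + r2 + r3 = - A" using a unfolding p_def by (simp add: algebra_simps)
    have "r1*r2 + r1*r3 + r2*r3 = r1*(r2+r3) + r2*r3" by (simp add: algebra_simps)
    thus "r1*r2 + r1*r3 + r2*r3 = B" using a unfolding q_def by (simp add: algebra_simps)
    have "r1*r2*r3 = r1*(r2*r3)" by (simp add: algebra_simps)
    also have "\<dots> = - C" using a r1' unfolding q_def p_def by (simp add: algebra_simps eq_neg_iff_add_eq_0)
    finally show "r1*r2*r3 = - C" .
  qed
  thus ?thesis by blast
qed

lemma three_sum:
  fixes x y z K :: real
  assumes K: "K > 0"
    and x: "81/100*K \<le> x^2" "x^2 \<le> 121/100*K"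
    and y: "81/100*K \<le> y^2" "y^2 \<le> 121/100*K"
    and z: "81/100*K \<le> z^2" "z^2 \<le> 121/100*K"
  shows "49/100 * K \<le> (x+y+z)^2"
proof -
  define rr where "rr = sqrt K"
  have s0: "rr > 0" and sK: "rr^2 = K" using K by (auto simp: rr_def)
  have lower: "(9/10)*rr \<le> (abs u)" if "81/100*K \<le> u^2" for u :: real
  proof -
    have "((9/10)*rr)^2 = 81/100*K" using sK by (simp add: power2_eq_square)
    hence "((9/10)*rr)^2 \<le> (abs u)^2" using that by simp
    thus ?thesis by (rule power2_le_imp_le) simp
  qed
  have hi: "(abs u) \<le> (11/10)*rr" if "u^2 \<le> 121/100*K" for u :: real
  proof -
    have "((11/10)*rr)^2 = 121/100*K" using sK by (simp add: power2_eq_square)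
    hence "(abs u)^2 \<le> ((11/10)*rr)^2" using that by simp
    thus ?thesis by (rule power2_le_imp_le) (use s0 in simp)
  qed
  have sgn: "(9/10)*rr \<le> u \<and> u \<le> (11/10)*rr \<or> -(11/10)*rr \<le> u \<and> u \<le> -(9/10)*rr"
    if "(9/10)*rr \<le> abs u" "abs u \<le> (11/10)*rr" for u :: real
    using that by (cases "u \<ge> 0") auto
  have X: "(9/10)*rr \<le> x \<and> x \<le> (11/10)*rr \<or> -(11/10)*rr \<le> x \<and> x \<le> -(9/10)*rr"
    using sgn lower[OF x(1)] hi[OF x(2)] by blast
  have Y: "(9/10)*rr \<le> y \<and> y \<le> (11/10)*rr \<or> -(11/10)*rr \<le> y \<and> y \<le> -(9/10)*rr"
    using sgn lower[OF y(1)] hi[OF y(2)] by blast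
  have Z: "(9/10)*rr \<le> z \<and> z \<le> (11/10)*rr \<or> -(11/10)*rr \<le> z \<and> z \<le> -(9/10)*rr"
    using sgn lower[OF z(1)] hi[OF z(2)] by blast
  have "(7/10)*rr \<le> x+y+z \<or> x+y+z \<le> -((7/10)*rr)"
    using X Y Z by (elim disjE conjE) linarith+
  hence "((7/10)*rr)^2 \<le> (x+y+z)^2"
  proof
    assume "(7/10)*rr \<le> x+y+z" thus ?thesis using s0 by (intro power_mono) auto
  next
    assume "x+y+z \<le> -((7/10)*rr)"
    hence "((7/10)*rr)^2 \<le> (-(x+y+z))^2" using s0 by (intro power_mono) auto
    moreover have "(-(x+y+z))^2 = (x+y+z)^2" by (rule power2_minus)
    ultimately show ?thesis by simp
  qed
  moreover have "((7/10)*rr)^2 = 49/100*K" using sK by (simp add: power2_eq_square)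
  ultimately show ?thesis by simp
qed

lemma second_diff:
  fixes g g1 g2 :: "real \<Rightarrow> real"
  assumes h: "h > 0"
    and d: "\<And>t. x - h \<le> t \<Longrightarrow> t \<le> x + h \<Longrightarrow> (g has_real_derivative g1 t) (at t)"
    and dd: "\<And>t. x - h \<le> t \<Longrightarrow> t \<le> x + h \<Longrightarrow> (g1 has_real_derivative g2 t) (at t)"
    and M: "\<And>t. x - h \<le> t \<Longrightarrow> t \<le> x + h \<Longrightarrow> \<bar>g2 t\<bar> \<le> M"
  shows "\<bar>g (x-h) - 2 * g x + g (x+h)\<bar> \<le> M * h^2"
proof -
  define diff where "diff = (\<lambda>m::nat. if m = 0 then g else if m = 1 then g1 else g2)"
  have D: "\<forall>m t. m < 2 \<and> x - h \<le> t \<and> t \<le> x + h \<longrightarrow> DERIV (diff m) t :> diff (Suc m) t"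
    using d dd by (auto simp: diff_def less_2_cases_iff)
  obtain t1 where t1: "x - h < t1" "t1 < x" and e1:
    "g (x-h) = (\<Sum>m<2. (diff m x / fact m) * ((x-h) - x)^m) + (diff 2 t1 / fact 2) * ((x-h) - x)^2"
    using Taylor[of 2 diff g "x-h" "x+h" x "x-h"] D h by (auto simp: diff_def)
  obtain t2 where t2: "x < t2" "t2 < x + h" and e2:
    "g (x+h) = (\<Sum>m<2. (diff m x / fact m) * ((x+h) - x)^m) + (diff 2 t2 / fact 2) * ((x+h) - x)^2"
    using Taylor[of 2 diff g "x-h" "x+h" x "x+h"] D h by (auto simp: diff_def)
  have e: "g (x-h) - 2 * g x + g (x+h) = (g2 t1 + g2 t2) / 2 * h^2"
    using e1 e2 by (simp add: diff_def numeral_2_eq_2 lessThan_Suc field_simps)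
  have "\<bar>g2 t1 + g2 t2\<bar> \<le> 2*M" using M[of t1] M[of t2] t1 t2 by auto
  hence "\<bar>g2 t1 + g2 t2\<bar> * h^2 \<le> (2*M) * h^2" by (rule mult_right_mono) auto
  hence "\<bar>(g2 t1 + g2 t2) / 2 * h^2\<bar> \<le> M * h^2" by (simp add: abs_mult)
  thus ?thesis using e by simp
qed

lemma partial_t:
  fixes F :: "real \<times> 'b::real_normed_vector \<Rightarrow> real"
  assumes "(F has_derivative F') (at (t,x))"
  shows "((\<lambda>sv. F (sv,x)) has_real_derivative F' (1,0)) (at t)"
proof -
  have "((\<lambda>sv. (sv,x)) has_derivative (\<lambda>h. (h,0))) (at t)"
    by (auto intro!: derivative_eq_intros)
  from has_derivative_compose[OF this assms]
  have 1: "((\<lambda>sv. F (sv,x)) has_derivative (\<lambda>h. F' (h,0))) (at t)" by simp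
  have bl: "bounded_linear F'" using assms has_derivative_bounded_linear by blast
  have lin: "F' (h,0) = F' (1,0) * h" for h
  proof -
    have "F' (h,0) = F' (h *\<^sub>R (1,0))" by simp
    also have "\<dots> = h *\<^sub>R F' (1,0)" by (rule linear_cmul[OF bounded_linear.linear[OF bl]])
    finally show ?thesis by simp
  qed
  have "(\<lambda>h. F' (h,0)) = (*) (F' (1,0))" by (rule ext) (rule lin)
  thus ?thesis using 1 unfolding has_field_derivative_def by simp
qed
lemma vieta_root:
  fixes A B C r1 r2 r3 r :: complex
  assumes "r1+r2+r3 = -A" "r1*r2+r1*r3+r2*r3 = B" "r1*r2*r3 = -C" "r = r1 \<or> r = r2 \<or> r = r3"
  shows "r^3 + A*r^2 + B*r + C = 0"
proof -
  have eA: "A = -(r1+r2+r3)" using assms(1) by simp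
  have eC: "C = -(r1*r2*r3)" using assms(3) by simp
  have "r^3 + A*r^2 + B*r + C = (r-r1)*(r-r2)*(r-r3)"
    unfolding eA eC assms(2)[symmetric] by (simp add: algebra_simps power2_eq_square power3_eq_cube)
  thus ?thesis using assms(4) by auto
qed

lemma coeff_bounds:
  fixes a1 a2 a3 m :: real and r1 r2 r3 :: complex
  assumes "r1+r2+r3 = - of_real a1" "r1*r2+r1*r3+r2*r3 = of_real a2" "r1*r2*r3 = - of_real a3"
    "cmod r1 \<le> m" "cmod r2 \<le> m" "cmod r3 \<le> m"
  shows "\<bar>a1\<bar> \<le> 3*m" "\<bar>a2\<bar> \<le> 3*m^2" "\<bar>a3\<bar> \<le> m^3"
proof -
  have m0: "0 \<le> m" using assms(4) norm_ge_zero order_trans by blast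
  have "\<bar>a1\<bar> = cmod (r1+r2+r3)" using assms(1) by (simp add: norm_minus_cancel)
  also have "\<dots> \<le> cmod r1 + cmod r2 + cmod r3" by (meson norm_triangle_le norm_triangle_ineq add_mono order_refl)
  finally show "\<bar>a1\<bar> \<le> 3*m" using assms(4-6) by linarith
  have p: "cmod (u * v) \<le> m^2" if "cmod u \<le> m" "cmod v \<le> m" for u v :: complex
    using that m0 by (simp add: norm_mult power2_eq_square mult_mono)
  have "\<bar>a2\<bar> = cmod (r1*r2+r1*r3+r2*r3)" using assms(2) by simp
  also have "\<dots> \<le> cmod (r1*r2) + cmod (r1*r3) + cmod (r2*r3)" by (meson norm_triangle_le norm_triangle_ineq add_mono order_refl)
  finally show "\<bar>a2\<bar> \<le> 3*m^2" using p[OF assms(4,5)] p[OF assms(4,6)] p[OF assms(5,6)] by linarith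
  have "\<bar>a3\<bar> = cmod (r1*r2*r3)" using assms(3) by (simp add: norm_minus_cancel)
  also have "\<dots> = cmod r1 * cmod r2 * cmod r3" by (simp add: norm_mult)
  also have "\<dots> \<le> m*m*m" using assms(4-6) by (intro mult_mono) (auto simp: m0)
  finally show "\<bar>a3\<bar> \<le> m^3" by (simp add: power3_eq_cube)
qed

lemma err_bound:
  fixes \<alpha> t a1 a2 a3 :: real
  assumes "\<alpha> > 0" "\<bar>t\<bar> \<le> \<alpha>" "\<bar>a1\<bar> \<le> 3*(\<alpha>/1000)" "\<bar>a2\<bar> \<le> 3*(\<alpha>/1000)^2" "\<bar>a3\<bar> \<le> (\<alpha>/1000)^3"
  shows "\<bar>a1*t^2 + a2*t + a3\<bar> \<le> 7/1000*\<alpha>^3"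
proof -
  have t2: "t^2 \<le> \<alpha>^2" using assms(2) by (metis abs_ge_zero power2_abs power_mono)
  have "\<bar>a1\<bar>*\<bar>t^2\<bar> \<le> 3*(\<alpha>/1000) * \<alpha>^2"
    by (rule mult_mono) (use assms(1,3) t2 in auto)
  hence 1: "\<bar>a1*t^2\<bar> \<le> 3*(\<alpha>/1000) * \<alpha>^2" by (simp add: abs_mult)
  have "\<bar>a2\<bar>*\<bar>t\<bar> \<le> 3*(\<alpha>/1000)^2 * \<alpha>"
    by (rule mult_mono) (use assms(1,2,4) in auto)
  hence 2: "\<bar>a2*t\<bar> \<le> 3*(\<alpha>/1000)^2 * \<alpha>" by (simp add: abs_mult)
  have e1: "3*(\<alpha>/1000) * \<alpha>^2 = 3/1000*\<alpha>^3" by (simp add: power2_eq_square power3_eq_cube)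
  have e2: "3*(\<alpha>/1000)^2 * \<alpha> = 3/1000000*\<alpha>^3" by (simp add: power2_eq_square power3_eq_cube)
  have e3: "(\<alpha>/1000)^3 = 1/1000000000*\<alpha>^3" by (simp add: power3_eq_cube)
  have a3p: "\<alpha>^3 > 0" using assms(1) by simp
  have tri: "\<bar>a1*t^2 + a2*t + a3\<bar> \<le> \<bar>a1*t^2\<bar> + \<bar>a2*t\<bar> + \<bar>a3\<bar>"
    by (meson abs_triangle_ineq add_mono order_trans order_refl)
  show ?thesis using tri 1 2 assms(5) e1 e2 e3 a3p by linarith
qed

lemma est1:
  fixes y Q E2 A er :: real
  assumes "27*y = -Q*(-A + er)" "\<bar>Q - E2\<bar> < E2/20" "\<bar>er\<bar> \<le> 7/1000*A" "E2 > 0" "A > 0"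
  shows "81/100*(E2*A/27) \<le> y" "y \<le> 121/100*(E2*A/27)"
proof -
  have Q: "19/20*E2 \<le> Q" "Q \<le> 21/20*E2" using abs_less_iff[THEN iffD1, OF assms(2)] by auto
  have QA: "19/20*E2*A \<le> Q*A" "Q*A \<le> 21/20*E2*A" using Q assms(5) by (auto intro: mult_right_mono)
  have "\<bar>Q*er\<bar> \<le> (21/20*E2)*(7/1000*A)" unfolding abs_mult
    using Q assms(3,4) by (intro mult_mono) auto
  moreover have "27*y = Q*A - Q*er" using assms(1) by (simp add: algebra_simps)
  ultimately show "81/100*(E2*A/27) \<le> y" "y \<le> 121/100*(E2*A/27)" using QA assms(4,5)
    unfolding abs_le_iff by linarith+
qed

lemma est2:
  fixes y P Q E2 A er :: real
  assumes "27*y = 4*P*(A/8) - Q*(-A/8 + er)" "\<bar>P - E2/4\<bar> < E2/80" "\<bar>Q - E2\<bar> < E2/20"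
    "\<bar>er\<bar> \<le> 7/1000*A" "E2 > 0" "A > 0"
  shows "81/100*(E2*A/27) \<le> 4*y" "4*y \<le> 121/100*(E2*A/27)"
proof -
  have Q: "19/20*E2 \<le> Q" "Q \<le> 21/20*E2" using abs_less_iff[THEN iffD1, OF assms(3)] by auto
  have P: "E2/4 - E2/80 \<le> P" "P \<le> E2/4 + E2/80" using abs_less_iff[THEN iffD1, OF assms(2)] by auto
  have QA: "19/20*E2*A \<le> Q*A" "Q*A \<le> 21/20*E2*A" using Q assms(6) by (auto intro: mult_right_mono)
  have PA: "(E2/4 - E2/80)*A \<le> P*A" "P*A \<le> (E2/4 + E2/80)*A" using P assms(6) by (auto intro: mult_right_mono)
  have QE: "\<bar>Q*er\<bar> \<le> (21/20*E2)*(7/1000*A)" unfolding abs_mult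
    using Q assms(4,5) by (intro mult_mono) auto
  hence QE2: "Q*er \<le> (21/20*E2)*(7/1000*A)" "-(Q*er) \<le> (21/20*E2)*(7/1000*A)" by (simp_all add: abs_le_iff)
  have eqs: "(E2/4 - E2/80)*A = 19/80*(E2*A)" "(E2/4 + E2/80)*A = 21/80*(E2*A)"
    "(21/20*E2)*(7/1000*A) = 147/20000*(E2*A)" "19/20*E2*A = 19/20*(E2*A)" "21/20*E2*A = 21/20*(E2*A)"
    by (simp_all add: algebra_simps)
  have PA': "19/80*(E2*A) \<le> P*A" "P*A \<le> 21/80*(E2*A)" using PA eqs by simp_all
  have QE': "Q*er \<le> 147/20000*(E2*A)" "-(Q*er) \<le> 147/20000*(E2*A)" using QE2 eqs by simp_all
  have QA': "19/20*(E2*A) \<le> Q*A" "Q*A \<le> 21/20*(E2*A)" using QA by simp_all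
  have Y: "27*(4*y) = 2*(P*A) + (Q*A)/2 - 4*(Q*er)" using assms(1) by (simp add: algebra_simps)
  show "81/100*(E2*A/27) \<le> 4*y" "4*y \<le> 121/100*(E2*A/27)" using QA' PA' QE' Y by linarith+
qed

lemma est3:
  fixes y P Q E2 A er :: real
  assumes "27*y = 4*P*A - Q*(0 + er)" "\<bar>P - E2/4\<bar> < E2/80" "\<bar>Q - E2\<bar> < E2/20"
    "\<bar>er\<bar> \<le> 7/1000*A" "E2 > 0" "A > 0"
  shows "81/100*(E2*A/27) \<le> y" "y \<le> 121/100*(E2*A/27)"
proof -
  have Q: "19/20*E2 \<le> Q" "Q \<le> 21/20*E2" using abs_less_iff[THEN iffD1, OF assms(3)] by auto
  have P: "E2/4 - E2/80 \<le> P" "P \<le> E2/4 + E2/80" using abs_less_iff[THEN iffD1, OF assms(2)] by auto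
  have PA: "(E2/4 - E2/80)*A \<le> P*A" "P*A \<le> (E2/4 + E2/80)*A" using P assms(6) by (auto intro: mult_right_mono)
  have QE: "\<bar>Q*er\<bar> \<le> (21/20*E2)*(7/1000*A)" unfolding abs_mult
    using Q assms(4,5) by (intro mult_mono) auto
  hence QE2: "Q*er \<le> (21/20*E2)*(7/1000*A)" "-(Q*er) \<le> (21/20*E2)*(7/1000*A)" by (simp_all add: abs_le_iff)
  have eqs: "(E2/4 - E2/80)*A = 19/80*(E2*A)" "(E2/4 + E2/80)*A = 21/80*(E2*A)"
    "(21/20*E2)*(7/1000*A) = 147/20000*(E2*A)"
    by (simp_all add: algebra_simps)
  have PA': "19/80*(E2*A) \<le> P*A" "P*A \<le> 21/80*(E2*A)" using PA eqs by simp_all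
  have QE': "Q*er \<le> 147/20000*(E2*A)" "-(Q*er) \<le> 147/20000*(E2*A)" using QE2 eqs by simp_all
  have Y: "27*y = 4*(P*A) - Q*er" using assms(1) by (simp add: algebra_simps)
  show "81/100*(E2*A/27) \<le> y" "y \<le> 121/100*(E2*A/27)" using PA' QE' Y by linarith+
qed

lemma final_contra:
  fixes \<alpha> M E2 :: real
  assumes "\<alpha> > 0" "M > 0" "E2 > 0" "\<alpha> < E2/(27*M^2)" "49/100*(E2*\<alpha>^3/27) \<le> (M*(\<alpha>/2)^2)^2"
  shows False
proof -
  have "M^2*\<alpha> < E2/27" using assms(2,4) by (simp add: field_simps)
  hence Y: "\<alpha>^3*(M^2*\<alpha>) < \<alpha>^3*(E2/27)" using assms(1) by simp
  have "(M*(\<alpha>/2)^2)^2 = \<alpha>^3*(M^2*\<alpha>)/16" by (simp add: power2_eq_square power3_eq_cube)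
  moreover have "E2*\<alpha>^3/27 = \<alpha>^3*(E2/27)" by simp
  moreover have "\<alpha>^3*(E2/27) > 0" using assms(1,3) by simp
  ultimately show False using assms(5) Y by linarith
qed
theorem lemma4p2:
  fixes a b e1 e2 :: "real \<Rightarrow> real ^ 'n \<Rightarrow> real"
    and \<alpha> a1 a2 a3 :: "real ^ 'n \<Rightarrow> real"
    and c T :: real and \<xi>0 :: "real ^ 'n"
    and W :: "(real \<times> (real ^ 'n)) set" and V :: "(real ^ 'n) set"
  assumes cT: "c > 0" "T > 0"
    and a_smooth: "C_inf_on ({-c<..<T} \<times> (UNIV - {0})) (\<lambda>(t, \<xi>). a t \<xi>)"
    and b_smooth: "C_inf_on ({-c<..<T} \<times> (UNIV - {0})) (\<lambda>(t, \<xi>). b t \<xi>)"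
    and a_hom: "\<And>t \<xi> s. t \<in> {-c<..<T} \<Longrightarrow> \<xi> \<noteq> 0 \<Longrightarrow> s > 0 \<Longrightarrow> a t (s *\<^sub>R \<xi>) = a t \<xi>"
    and b_hom: "\<And>t \<xi> s. t \<in> {-c<..<T} \<Longrightarrow> \<xi> \<noteq> 0 \<Longrightarrow> s > 0 \<Longrightarrow> b t (s *\<^sub>R \<xi>) = b t \<xi>"
    and Delta_nonneg: "\<And>t \<xi>. 0 \<le> t \<Longrightarrow> t < T \<Longrightarrow> \<xi> \<noteq> 0 \<Longrightarrow> 4 * (a t \<xi>)^3 - 27 * (b t \<xi>)^2 \<ge> 0"
    and xi0: "norm \<xi>0 = 1"
    and a0: "a 0 \<xi>0 = 0"
    and dta: "deriv (\<lambda>t. a t \<xi>0) 0 \<noteq> 0"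
    and W: "open W" "(0, \<xi>0) \<in> W" "W \<subseteq> {-c<..<T} \<times> (UNIV - {0})"
    and V: "open V" "\<xi>0 \<in> V"
    and e1: "C_inf_on W (\<lambda>(t, \<xi>). e1 t \<xi>)" "\<And>t \<xi>. (t, \<xi>) \<in> W \<Longrightarrow> e1 t \<xi> > 0"
    and e2: "C_inf_on W (\<lambda>(t, \<xi>). e2 t \<xi>)" "\<And>t \<xi>. (t, \<xi>) \<in> W \<Longrightarrow> e2 t \<xi> > 0"
    and \<alpha>: "C_inf_on V \<alpha>" "\<alpha> \<xi>0 = 0"
    and \<alpha>_nonneg: "\<exists>V'. open V' \<and> \<xi>0 \<in> V' \<and> (\<forall>\<xi>\<in>V'. \<alpha> \<xi> \<ge> 0)"
    and aj: "C_inf_on V a1" "C_inf_on V a2" "C_inf_on V a3"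
      "a1 \<xi>0 = 0" "a2 \<xi>0 = 0" "a3 \<xi>0 = 0"
    and a_fact: "\<And>t \<xi>. (t, \<xi>) \<in> W \<Longrightarrow> a t \<xi> = e1 t \<xi> * (t + \<alpha> \<xi>)"
    and Delta_fact: "\<And>t \<xi>. (t, \<xi>) \<in> W \<Longrightarrow>
       4 * (a t \<xi>)^3 - 27 * (b t \<xi>)^2 = e2 t \<xi> * (t^3 + a1 \<xi> * t^2 + a2 \<xi> * t + a3 \<xi>)"
  shows "\<exists>U \<epsilon>. open U \<and> \<xi>0 \<in> U \<and> \<epsilon> > 0 \<and>
           (\<forall>\<xi>\<in>U. \<exists>\<nu>::complex.
              \<nu>^3 + of_real (a1 \<xi>) * \<nu>^2 + of_real (a2 \<xi>) * \<nu> + of_real (a3 \<xi>) = 0 \<and>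
              cmod \<nu> / \<epsilon> \<ge> \<alpha> \<xi>)"
proof -
  define S where "S = {-c<..<T} \<times> (UNIV - {0::real^'n})"
  define fb :: "real \<times> (real^'n) \<Rightarrow> real" where "fb = (\<lambda>(t, \<xi>). b t \<xi>)"
  have "Ck_on (Suc (Suc 0)) S fb" using b_smooth unfolding C_inf_on_def S_def fb_def by blast
  then obtain f' where f'1: "\<forall>x\<in>S. (fb has_derivative f' x) (at x)"
    and f'2: "\<And>v. Ck_on (Suc 0) S (\<lambda>x. f' x v)" by auto
  obtain f'' where f''1: "\<forall>x\<in>S. ((\<lambda>x. f' x (1,0)) has_derivative f'' x) (at x)"
    and f''2: "\<And>w. continuous_on S (\<lambda>x. f'' x w)"
    using f'2[of "(1,0)"] by auto
  define g1 where "g1 = (\<lambda>x. f' x (1,0))"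
  define g2 where "g2 = (\<lambda>x. f'' x (1,0))"
  have db: "((\<lambda>u. b u \<xi>) has_real_derivative g1 (t,\<xi>)) (at t)" if "(t,\<xi>) \<in> S" for t \<xi>
    using partial_t[OF f'1[rule_format, OF that]] unfolding fb_def g1_def by simp
  have ddb: "((\<lambda>u. g1 (u,\<xi>)) has_real_derivative g2 (t,\<xi>)) (at t)" if "(t,\<xi>) \<in> S" for t \<xi>
    using partial_t[OF f''1[rule_format, OF that]] unfolding g1_def g2_def by simp
  obtain dW where dW: "dW > 0" "ball (0,\<xi>0) dW \<subseteq> W" using W(1,2) openE by blast
  define r0 where "r0 = dW/2"
  have r0: "r0 > 0" using dW unfolding r0_def by simp
  have cb: "cball (0,\<xi>0) r0 \<subseteq> W"
    using dW subset_trans[OF cball_subset_ball_iff[THEN iffD2] dW(2)] unfolding r0_def by auto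
  have cbS: "cball (0,\<xi>0) r0 \<subseteq> S" using cb W(3) unfolding S_def by auto
  have "continuous_on (cball (0,\<xi>0) r0) g2" using f''2 cbS continuous_on_subset unfolding g2_def by blast
  hence "bounded (g2 ` cball (0,\<xi>0) r0)" by (intro compact_imp_bounded compact_continuous_image) auto
  then obtain M where M: "M > 0" "\<And>x. x \<in> cball (0,\<xi>0) r0 \<Longrightarrow> \<bar>g2 x\<bar> \<le> M"
    unfolding bounded_pos by auto
  define E1 where "E1 = e1 0 \<xi>0"
  define E2 where "E2 = e2 0 \<xi>0"
  have E1p: "E1 > 0" and E2p: "E2 > 0" using e1(2) e2(2) W(2) unfolding E1_def E2_def by auto
  have ce1: "continuous_on W (\<lambda>x. (case x of (t,\<xi>) \<Rightarrow> e1 t \<xi>)^3)"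
    using e1(1) unfolding C_inf_on_def by (intro continuous_on_power) (metis Ck_on.simps(1))
  have ce2: "continuous_on W (\<lambda>x. case x of (t,\<xi>) \<Rightarrow> e2 t \<xi>)"
    using e2(1) unfolding C_inf_on_def by (metis Ck_on.simps(1))
  have c\<alpha>: "continuous_on V \<alpha>" using \<alpha>(1) unfolding C_inf_on_def by (metis Ck_on.simps(1))
  have keyeq: "E2 = 4*E1^3"
  proof (rule ccontr)
    assume ne: "E2 \<noteq> 4*E1^3"
    define H where "H = (\<lambda>x::real\<times>(real^'n). 4*(case x of (t,\<xi>) \<Rightarrow> e1 t \<xi>)^3 - (case x of (t,\<xi>) \<Rightarrow> e2 t \<xi>))"
    have cH: "continuous_on W H" unfolding H_def using ce1 ce2
      by (intro continuous_on_diff continuous_on_mult continuous_on_const) auto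
    define h0 where "h0 = H (0,\<xi>0)"
    have h0: "h0 = 4*E1^3 - E2" unfolding h0_def H_def E1_def E2_def by simp
    hence h0n: "\<bar>h0\<bar> > 0" using ne by auto
    obtain d where d: "d > 0" "\<And>x'. x' \<in> W \<Longrightarrow> dist x' (0,\<xi>0) < d \<Longrightarrow> dist (H x') h0 < \<bar>h0\<bar>"
      using cH[unfolded continuous_on_iff, rule_format, OF W(2) h0n] unfolding h0_def by blast
    define t where "t = (if h0 > 0 then -1 else 1) * (min d dW / 2)"
    have tabs: "\<bar>t\<bar> = min d dW / 2" "t \<noteq> 0" using d(1) dW(1) unfolding t_def by auto
    have dt: "dist (t,\<xi>0) (0,\<xi>0) = \<bar>t\<bar>" by (simp add: dist_Pair_Pair dist_real_def)
    have tW: "(t,\<xi>0) \<in> W" using dW(2) dt tabs dW(1) d(1) by (auto simp: dist_commute)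
    have Ht: "dist (H (t,\<xi>0)) h0 < \<bar>h0\<bar>" using d(2)[OF tW] dt tabs d(1) dW(1) by auto
    have sgn: "h0 * H (t,\<xi>0) > 0" using Ht unfolding dist_real_def
      by (cases "h0 > 0") (auto simp: abs_less_iff mult_pos_pos mult_neg_neg)
    have eq: "H (t,\<xi>0) * t^3 = 27*(b t \<xi>0)^2"
      using Delta_fact[OF tW] a_fact[OF tW] \<alpha>(2) aj(4-6) unfolding H_def
      by (simp add: power_mult_distrib algebra_simps)
    have "H (t,\<xi>0) * t^3 < 0"
    proof (cases "h0 > 0")
      case True
      hence "t < 0" unfolding t_def using d(1) dW(1) by simp
      moreover have "H (t,\<xi>0) > 0" using sgn True by (simp add: zero_less_mult_iff)
      ultimately show ?thesis by (simp add: mult_pos_neg power3_eq_cube mult_neg_neg)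
    next
      case False
      hence "h0 < 0" using h0n by auto
      hence "t > 0" "H (t,\<xi>0) < 0" using sgn False d(1) dW(1) unfolding t_def by (auto simp: zero_less_mult_iff)
      thus ?thesis by (simp add: mult_neg_pos)
    qed
    thus False using eq by simp
  qed
  have pos1: "E2/80 > 0" and pos2: "E2/20 > 0" using E2p by simp_all
  obtain d1 where d1: "d1 > 0" "\<forall>x'\<in>W. dist x' (0,\<xi>0) < d1 \<longrightarrow>
      dist ((case x' of (t,\<xi>) \<Rightarrow> e1 t \<xi>)^3) ((case (0,\<xi>0) of (t,\<xi>) \<Rightarrow> e1 t \<xi>)^3) < E2/80"
    using ce1[unfolded continuous_on_iff, rule_format, OF W(2) pos1] by blast
  obtain d2 where d2: "d2 > 0" "\<forall>x'\<in>W. dist x' (0,\<xi>0) < d2 \<longrightarrow>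
      dist (case x' of (t,\<xi>) \<Rightarrow> e2 t \<xi>) (case (0,\<xi>0) of (t,\<xi>) \<Rightarrow> e2 t \<xi>) < E2/20"
    using ce2[unfolded continuous_on_iff, rule_format, OF W(2) pos2] by blast
  define d where "d = min r0 (min d1 d2)"
  have dp: "d > 0" using r0 d1(1) d2(1) unfolding d_def by simp
  define \<rho> where "\<rho> = min (d/2) (E2/(27*M^2))"
  have \<rho>p: "\<rho> > 0" using dp E2p M(1) unfolding \<rho>_def by simp
  define U where "U = ball \<xi>0 (d/2) \<inter> (\<alpha> -` {..<\<rho>} \<inter> V)"
  have "open (\<alpha> -` {..<\<rho>} \<inter> V)" using continuous_on_open_vimage[OF V(1)] c\<alpha> open_lessThan by blast
  hence Uo: "open U" unfolding U_def by (rule open_Int[OF open_ball])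
  have U0: "\<xi>0 \<in> U" unfolding U_def using dp \<rho>p \<alpha>(2) V(2) by auto
  show ?thesis
  proof (intro exI[of _ U] exI[of _ "1/1000::real"] conjI ballI Uo U0)
    show "(0::real) < 1/1000" by simp
    fix \<xi> assume \<xi>U: "\<xi> \<in> U"
    obtain r1 r2 r3 where vi: "r1+r2+r3 = - complex_of_real (a1 \<xi>)"
      "r1*r2+r1*r3+r2*r3 = complex_of_real (a2 \<xi>)" "r1*r2*r3 = - complex_of_real (a3 \<xi>)"
      using cubic_vieta by blast
    have roots: "r^3 + of_real (a1 \<xi>) * r^2 + of_real (a2 \<xi>)*r + of_real (a3 \<xi>) = 0"
      if "r = r1 \<or> r = r2 \<or> r = r3" for r
      using vieta_root[OF vi that] by simp
    show "\<exists>\<nu>::complex. \<nu>^3 + of_real (a1 \<xi>) * \<nu>^2 + of_real (a2 \<xi>) * \<nu> + of_real (a3 \<xi>) = 0 \<and>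
              cmod \<nu> / (1/1000) \<ge> \<alpha> \<xi>"
    proof (rule ccontr)
      assume neg: "\<not> ?thesis"
      define al where "al = \<alpha> \<xi>"
      have small: "cmod r * 1000 < al" if "r = r1 \<or> r = r2 \<or> r = r3" for r
        using neg roots[OF that] unfolding al_def by force
      have alp: "al > 0" using small[of r1] by (smt (verit) norm_ge_zero)
      have rb: "cmod r1 \<le> al/1000" "cmod r2 \<le> al/1000" "cmod r3 \<le> al/1000"
        using small[of r1] small[of r2] small[of r3] by auto
      note cbds = coeff_bounds[OF vi rb]
      have er: "\<bar>a1 \<xi>*t^2 + a2 \<xi>*t + a3 \<xi>\<bar> \<le> 7/1000*al^3" if "\<bar>t\<bar> \<le> al" for t
        using err_bound[OF alp that cbds] .
      have alr: "al < \<rho>" and \<xi>d: "dist \<xi>0 \<xi> < d/2" and \<xi>V: "\<xi> \<in> V"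
        using \<xi>U unfolding U_def al_def by auto
      have inb: "dist (0,\<xi>0) (t,\<xi>) < d" if "-al \<le> t" "t \<le> 0" for t
      proof -
        have "dist (0,\<xi>0) (t,\<xi>) = sqrt ((dist 0 t)^2 + (dist \<xi>0 \<xi>)^2)" by (simp add: dist_Pair_Pair)
        also have "\<dots> \<le> \<bar>dist 0 t\<bar> + \<bar>dist \<xi>0 \<xi>\<bar>" by (rule sqrt_sum_squares_le_sum_abs)
        also have "\<dots> < d" using that alr \<xi>d unfolding \<rho>_def dist_real_def by auto
        finally show ?thesis .
      qed
      have inC: "(t,\<xi>) \<in> cball (0,\<xi>0) r0" if "-al \<le> t" "t \<le> 0" for t
        using inb[OF that] unfolding d_def by auto
      have inW: "(t,\<xi>) \<in> W" if "-al \<le> t" "t \<le> 0" for t using inC[OF that] cb by auto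
      have inS: "(t,\<xi>) \<in> S" if "-al \<le> t" "t \<le> 0" for t using inC[OF that] cbS by auto
      have P: "\<bar>(e1 t \<xi>)^3 - E2/4\<bar> < E2/80" if "-al \<le> t" "t \<le> 0" for t
        using d1(2)[rule_format, OF inW[OF that]] inb[OF that] keyeq unfolding d_def E1_def
        by (auto simp: dist_commute dist_real_def abs_minus_commute)
      have Q: "\<bar>e2 t \<xi> - E2\<bar> < E2/20" if "-al \<le> t" "t \<le> 0" for t
        using d2(2)[rule_format, OF inW[OF that]] inb[OF that] unfolding d_def E2_def
        by (auto simp: dist_commute dist_real_def abs_minus_commute)
      have idt: "27*(b t \<xi>)^2 = 4*(e1 t \<xi>)^3*(t+al)^3 - e2 t \<xi>*(t^3 + (a1 \<xi>*t^2 + a2 \<xi>*t + a3 \<xi>))"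
        if "-al \<le> t" "t \<le> 0" for t
      proof -
        have D: "4 * (a t \<xi>)^3 - 27 * (b t \<xi>)^2 = e2 t \<xi> * (t^3 + a1 \<xi> * t^2 + a2 \<xi> * t + a3 \<xi>)"
          by (rule Delta_fact[OF inW[OF that]])
        have A4: "4*(a t \<xi>)^3 = 4*(e1 t \<xi>)^3*(t+al)^3"
          using a_fact[OF inW[OF that]] unfolding al_def by (simp add: power_mult_distrib)
        have E: "e2 t \<xi> * (t^3 + a1 \<xi> * t^2 + a2 \<xi> * t + a3 \<xi>) = e2 t \<xi>*(t^3 + (a1 \<xi>*t^2 + a2 \<xi>*t + a3 \<xi>))"
          by (simp add: algebra_simps)
        show ?thesis using D A4 E by linarith
      qed
      have alm: "-al \<le> -al" "-al \<le> 0" "-al \<le> -al/2" "-al/2 \<le> 0" "-al \<le> (0::real)" "(0::real) \<le> 0"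
        using alp by auto
      have A: "al^3 > 0" using alp by simp
      have id1: "27*(b (-al) \<xi>)^2 = - e2 (-al) \<xi> * (-(al^3) + (a1 \<xi>*(-al)^2 + a2 \<xi>*(-al) + a3 \<xi>))"
        using idt[OF alm(1,2)] by simp
      have id2: "27*(b (-al/2) \<xi>)^2 = 4*(e1 (-al/2) \<xi>)^3*(al^3/8) - e2 (-al/2) \<xi> * (-(al^3)/8 + (a1 \<xi>*(-al/2)^2 + a2 \<xi>*(-al/2) + a3 \<xi>))"
        using idt[OF alm(3,4)] by (simp add: power3_eq_cube field_simps)
      have id3: "27*(b 0 \<xi>)^2 = 4*(e1 0 \<xi>)^3*al^3 - e2 0 \<xi> * (0 + (a1 \<xi>*0^2 + a2 \<xi>*0 + a3 \<xi>))"
        using idt[OF alm(5,6)] by simp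
      have er1: "\<bar>a1 \<xi>*(-al)^2 + a2 \<xi>*(-al) + a3 \<xi>\<bar> \<le> 7/1000*al^3" by (rule er) (use alp in simp)
      have er2: "\<bar>a1 \<xi>*(-al/2)^2 + a2 \<xi>*(-al/2) + a3 \<xi>\<bar> \<le> 7/1000*al^3" by (rule er) (use alp in simp)
      have er3: "\<bar>a1 \<xi>*0^2 + a2 \<xi>*0 + a3 \<xi>\<bar> \<le> 7/1000*al^3" by (rule er) (use alp in simp)
      have u: "81/100*(E2*al^3/27) \<le> (b (-al) \<xi>)^2" "(b (-al) \<xi>)^2 \<le> 121/100*(E2*al^3/27)"
        using est1[OF id1 Q[OF alm(1,2)] er1 E2p A] alp by auto
      have v: "81/100*(E2*al^3/27) \<le> 4*(b (-al/2) \<xi>)^2" "4*(b (-al/2) \<xi>)^2 \<le> 121/100*(E2*al^3/27)"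
        using est2[OF id2 P[OF alm(3,4)] Q[OF alm(3,4)] er2 E2p A] alp by auto
      have w: "81/100*(E2*al^3/27) \<le> (b 0 \<xi>)^2" "(b 0 \<xi>)^2 \<le> 121/100*(E2*al^3/27)"
        using est3[OF id3 P[OF alm(5,6)] Q[OF alm(5,6)] er3 E2p A] alp by auto
      have v2: "(-2 * b (-al/2) \<xi>)^2 = 4*(b (-al/2) \<xi>)^2" by (simp add: power_mult_distrib)
      have Kp: "E2*al^3/27 > 0" using E2p A by simp
      have lowb: "49/100*(E2*al^3/27) \<le> (b (-al) \<xi> + (-2 * b (-al/2) \<xi>) + b 0 \<xi>)^2"
        by (rule three_sum[OF Kp u v[folded v2] w])
      have h2: "al/2 > 0" using alp by simp
      have dd1: "((\<lambda>u. b u \<xi>) has_real_derivative g1 (t,\<xi>)) (at t)"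
        if "-al/2 - al/2 \<le> t" "t \<le> -al/2 + al/2" for t
      proof -
        have "-al \<le> t" "t \<le> 0" using that by simp_all
        thus ?thesis by (intro db inS)
      qed
      have dd2: "((\<lambda>u. g1 (u,\<xi>)) has_real_derivative g2 (t,\<xi>)) (at t)"
        if "-al/2 - al/2 \<le> t" "t \<le> -al/2 + al/2" for t
      proof -
        have "-al \<le> t" "t \<le> 0" using that by simp_all
        thus ?thesis by (intro ddb inS)
      qed
      have dd3: "\<bar>g2 (t,\<xi>)\<bar> \<le> M"
        if "-al/2 - al/2 \<le> t" "t \<le> -al/2 + al/2" for t
      proof -
        have "-al \<le> t" "t \<le> 0" using that by simp_all
        thus ?thesis by (intro M(2) inC)
      qed
      have sd: "\<bar>b (-al/2 - al/2) \<xi> - 2 * b (-al/2) \<xi> + b (-al/2 + al/2) \<xi>\<bar> \<le> M * (al/2)^2"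
        using second_diff[OF h2 dd1 dd2 dd3] .
      hence sd': "\<bar>b (-al) \<xi> + (-2 * b (-al/2) \<xi>) + b 0 \<xi>\<bar> \<le> M * (al/2)^2" by simp
      have "(b (-al) \<xi> + (-2 * b (-al/2) \<xi>) + b 0 \<xi>)^2 \<le> (M * (al/2)^2)^2"
        using power_mono[OF sd', of 2] by simp
      hence "49/100*(E2*al^3/27) \<le> (M * (al/2)^2)^2" using lowb by linarith
      moreover have "al < E2/(27*M^2)" using alr unfolding \<rho>_def by simp
      ultimately show False using final_contra[OF alp M(1) E2p] by blast
    qed
  qed
qed

end
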